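(* Let $\mathcal{S}$ be a locating-dominating set of $G_{2,m}=P_2\square P_m$, with vertices labeled $v_1,\dots,v_{2m}$ as described in the context. Suppose there is a $(2\times 4)$-block $\mathcal{B}$ of $G_{2,m}$ consisting of the vertices $v_i,\dots,v_{i+7}$ such that $|\mathcal{B}\cap\mathcal{S}|=2$. Then $i\neq 1$, $i+7\neq 2m$, and $v_{i-2},v_{i-1},v_{i+8},v_{i+9}\in\mathcal{S}$.
   Context: $P_n$ is the path on $n$ vertices, $\square$ the Cartesian product, and $G_{n,m}=P_n\square P_m$ is viewed as a grid with $n$ rows and $m$ columns. Vertices are labeled column by column: the vertex in row $r$ ($1\le r\le n$) and column $c$ ($1\le c\le m$) is $v_{r+n(c-1)}$; vertices in the same column (or same row, adjacent columns) are adjacent as in the grid. A $(n\times \ell)$-block is the set of vertices in $\ell$ consecutive columns. For $C\subseteq V(G)$ and $v\in V(G)$ let $I(v)=N[v]\cap C$ ($N[v]$ the closed neighborhood). $C$ is a locating-dominating set if $I(v)\neq\emptyset$ for all $v\in V(G)\setminus C$ and $I(u)\neq I(v)$ for all distinct $u,v\in V(G)\setminus C$. *)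

theory Defs
  imports Main
begin

text \<open>Grid graph G_{n,m} = P_n \<box> P_m, vertices v_1..v_{nm} encoded by their index k;
  v_k lies in row ((k-1) mod n)+1 and column ((k-1) div n)+1.\<close>

definition grid_vertices :: "nat \<Rightarrow> nat \<Rightarrow> nat set" where
  "grid_vertices n m = {1..n*m}"

definition grid_row :: "nat \<Rightarrow> nat \<Rightarrow> nat" where
  "grid_row n k = (k - 1) mod n + 1"

definition grid_col :: "nat \<Rightarrow> nat \<Rightarrow> nat" where
  "grid_col n k = (k - 1) div n + 1"

definition grid_adj :: "nat \<Rightarrow> nat \<Rightarrow> nat \<Rightarrow> nat \<Rightarrow> bool" where
  "grid_adj n m u v \<longleftrightarrow> u \<in> grid_vertices n m \<and> v \<in> grid_vertices n m \<and>
     ((grid_col n u = grid_col n v \<and>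
        (grid_row n u = grid_row n v + 1 \<or> grid_row n v = grid_row n u + 1)) \<or>
      (grid_row n u = grid_row n v \<and>
        (grid_col n u = grid_col n v + 1 \<or> grid_col n v = grid_col n u + 1)))"

definition closed_nbhd :: "nat \<Rightarrow> nat \<Rightarrow> nat \<Rightarrow> nat set" where
  "closed_nbhd n m v = {u \<in> grid_vertices n m. u = v \<or> grid_adj n m u v}"

definition locating_dominating :: "nat \<Rightarrow> nat \<Rightarrow> nat set \<Rightarrow> bool" where
  "locating_dominating n m C \<longleftrightarrow> C \<subseteq> grid_vertices n m \<and>
     (\<forall>v \<in> grid_vertices n m - C. closed_nbhd n m v \<inter> C \<noteq> {}) \<and>
     (\<forall>u \<in> grid_vertices n m - C. \<forall>v \<in> grid_vertices n m - C.
        u \<noteq> v \<longrightarrow> closed_nbhd n m u \<inter> C \<noteq> closed_nbhd n m v \<inter> C)"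

definition is_block :: "nat \<Rightarrow> nat \<Rightarrow> nat \<Rightarrow> nat set \<Rightarrow> bool" where
  "is_block n m l B \<longleftrightarrow> (\<exists>c. 1 \<le> c \<and> c + l - 1 \<le> m \<and> B = {n*(c-1)+1 .. n*(c+l-1)})"

end

theory Submission
  imports Defs
begin

lemma finite_core:
  assumes "\<not> (x0 \<and> x1 \<and> x2)"
    and "\<not> (x0 \<and> x1 \<and> x3)"
    and "\<not> (x0 \<and> x1 \<and> x4)"
    and "\<not> (x0 \<and> x1 \<and> x5)"
    and "\<not> (x0 \<and> x1 \<and> x6)"
    and "\<not> (x0 \<and> x1 \<and> x7)"
    and "\<not> (x0 \<and> x2 \<and> x3)"
    and "\<not> (x0 \<and> x2 \<and> x4)"
    and "\<not> (x0 \<and> x2 \<and> x5)"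
    and "\<not> (x0 \<and> x2 \<and> x6)"
    and "\<not> (x0 \<and> x2 \<and> x7)"
    and "\<not> (x0 \<and> x3 \<and> x4)"
    and "\<not> (x0 \<and> x3 \<and> x5)"
    and "\<not> (x0 \<and> x3 \<and> x6)"
    and "\<not> (x0 \<and> x3 \<and> x7)"
    and "\<not> (x0 \<and> x4 \<and> x5)"
    and "\<not> (x0 \<and> x4 \<and> x6)"
    and "\<not> (x0 \<and> x4 \<and> x7)"
    and "\<not> (x0 \<and> x5 \<and> x6)"
    and "\<not> (x0 \<and> x5 \<and> x7)"
    and "\<not> (x0 \<and> x6 \<and> x7)"
    and "\<not> (x1 \<and> x2 \<and> x3)"
    and "\<not> (x1 \<and> x2 \<and> x4)"
    and "\<not> (x1 \<and> x2 \<and> x5)"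
    and "\<not> (x1 \<and> x2 \<and> x6)"
    and "\<not> (x1 \<and> x2 \<and> x7)"
    and "\<not> (x1 \<and> x3 \<and> x4)"
    and "\<not> (x1 \<and> x3 \<and> x5)"
    and "\<not> (x1 \<and> x3 \<and> x6)"
    and "\<not> (x1 \<and> x3 \<and> x7)"
    and "\<not> (x1 \<and> x4 \<and> x5)"
    and "\<not> (x1 \<and> x4 \<and> x6)"
    and "\<not> (x1 \<and> x4 \<and> x7)"
    and "\<not> (x1 \<and> x5 \<and> x6)"
    and "\<not> (x1 \<and> x5 \<and> x7)"
    and "\<not> (x1 \<and> x6 \<and> x7)"
    and "\<not> (x2 \<and> x3 \<and> x4)"
    and "\<not> (x2 \<and> x3 \<and> x5)"
    and "\<not> (x2 \<and> x3 \<and> x6)"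
    and "\<not> (x2 \<and> x3 \<and> x7)"
    and "\<not> (x2 \<and> x4 \<and> x5)"
    and "\<not> (x2 \<and> x4 \<and> x6)"
    and "\<not> (x2 \<and> x4 \<and> x7)"
    and "\<not> (x2 \<and> x5 \<and> x6)"
    and "\<not> (x2 \<and> x5 \<and> x7)"
    and "\<not> (x2 \<and> x6 \<and> x7)"
    and "\<not> (x3 \<and> x4 \<and> x5)"
    and "\<not> (x3 \<and> x4 \<and> x6)"
    and "\<not> (x3 \<and> x4 \<and> x7)"
    and "\<not> (x3 \<and> x5 \<and> x6)"
    and "\<not> (x3 \<and> x5 \<and> x7)"
    and "\<not> (x3 \<and> x6 \<and> x7)"
    and "\<not> (x4 \<and> x5 \<and> x6)"
    and "\<not> (x4 \<and> x5 \<and> x7)"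
    and "\<not> (x4 \<and> x6 \<and> x7)"
    and "\<not> (x5 \<and> x6 \<and> x7)"
    and "\<not> x0 \<longrightarrow> l1 \<or> x1 \<or> x2"
    and "\<not> x1 \<longrightarrow> l2 \<or> x0 \<or> x3"
    and "\<not> x2 \<longrightarrow> x0 \<or> x3 \<or> x4"
    and "\<not> x3 \<longrightarrow> x1 \<or> x2 \<or> x5"
    and "\<not> x4 \<longrightarrow> x2 \<or> x5 \<or> x6"
    and "\<not> x5 \<longrightarrow> x3 \<or> x4 \<or> x7"
    and "\<not> x6 \<longrightarrow> x4 \<or> x7 \<or> r1"
    and "\<not> x7 \<longrightarrow> x5 \<or> x6 \<or> r2"
    and "\<not> x0 \<longrightarrow> \<not> x1 \<longrightarrow> l1 \<or> l2 \<or> x2 \<or> x3"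
    and "\<not> x0 \<longrightarrow> \<not> x2 \<longrightarrow> l1 \<or> x1 \<or> x3 \<or> x4"
    and "\<not> x0 \<longrightarrow> \<not> x3 \<longrightarrow> l1 \<or> x5"
    and "\<not> x0 \<longrightarrow> \<not> x4 \<longrightarrow> l1 \<or> x1 \<or> x5 \<or> x6"
    and "\<not> x0 \<longrightarrow> \<not> x5 \<longrightarrow> l1 \<or> x1 \<or> x2 \<or> x3 \<or> x4 \<or> x7"
    and "\<not> x0 \<longrightarrow> \<not> x6 \<longrightarrow> l1 \<or> x1 \<or> x2 \<or> x4 \<or> x7 \<or> r1"
    and "\<not> x0 \<longrightarrow> \<not> x7 \<longrightarrow> l1 \<or> x1 \<or> x2 \<or> x5 \<or> x6 \<or> r2"
    and "\<not> x1 \<longrightarrow> \<not> x2 \<longrightarrow> l2 \<or> x4"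
    and "\<not> x1 \<longrightarrow> \<not> x3 \<longrightarrow> l2 \<or> x0 \<or> x2 \<or> x5"
    and "\<not> x1 \<longrightarrow> \<not> x4 \<longrightarrow> l2 \<or> x0 \<or> x2 \<or> x3 \<or> x5 \<or> x6"
    and "\<not> x1 \<longrightarrow> \<not> x5 \<longrightarrow> l2 \<or> x0 \<or> x4 \<or> x7"
    and "\<not> x1 \<longrightarrow> \<not> x6 \<longrightarrow> l2 \<or> x0 \<or> x3 \<or> x4 \<or> x7 \<or> r1"
    and "\<not> x1 \<longrightarrow> \<not> x7 \<longrightarrow> l2 \<or> x0 \<or> x3 \<or> x5 \<or> x6 \<or> r2"
    and "\<not> x2 \<longrightarrow> \<not> x3 \<longrightarrow> x0 \<or> x1 \<or> x4 \<or> x5"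
    and "\<not> x2 \<longrightarrow> \<not> x4 \<longrightarrow> x0 \<or> x3 \<or> x5 \<or> x6"
    and "\<not> x2 \<longrightarrow> \<not> x5 \<longrightarrow> x0 \<or> x7"
    and "\<not> x2 \<longrightarrow> \<not> x6 \<longrightarrow> x0 \<or> x3 \<or> x7 \<or> r1"
    and "\<not> x2 \<longrightarrow> \<not> x7 \<longrightarrow> x0 \<or> x3 \<or> x4 \<or> x5 \<or> x6 \<or> r2"
    and "\<not> x3 \<longrightarrow> \<not> x4 \<longrightarrow> x1 \<or> x6"
    and "\<not> x3 \<longrightarrow> \<not> x5 \<longrightarrow> x1 \<or> x2 \<or> x4 \<or> x7"
    and "\<not> x3 \<longrightarrow> \<not> x6 \<longrightarrow> x1 \<or> x2 \<or> x4 \<or> x5 \<or> x7 \<or> r1"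
    and "\<not> x3 \<longrightarrow> \<not> x7 \<longrightarrow> x1 \<or> x2 \<or> x6 \<or> r2"
    and "\<not> x4 \<longrightarrow> \<not> x5 \<longrightarrow> x2 \<or> x3 \<or> x6 \<or> x7"
    and "\<not> x4 \<longrightarrow> \<not> x6 \<longrightarrow> x2 \<or> x5 \<or> x7 \<or> r1"
    and "\<not> x4 \<longrightarrow> \<not> x7 \<longrightarrow> x2 \<or> r2"
    and "\<not> x5 \<longrightarrow> \<not> x6 \<longrightarrow> x3 \<or> r1"
    and "\<not> x5 \<longrightarrow> \<not> x7 \<longrightarrow> x3 \<or> x4 \<or> x6 \<or> r2"
    and "\<not> x6 \<longrightarrow> \<not> x7 \<longrightarrow> x4 \<or> x5 \<or> r1 \<or> r2"
  shows "l1 \<and> l2 \<and> r1 \<and> r2"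
  using assms by argo

lemma rc: "grid_row 2 (Suc (2*p)) = 1" "grid_row 2 (Suc (Suc (2*p))) = 2" "grid_col 2 (Suc (2*p)) = p+1" "grid_col 2 (Suc (Suc (2*p))) = p+1"
  unfolding grid_row_def grid_col_def by simp_all

lemma oddev: "(k::nat) \<ge> 1 \<Longrightarrow> (\<exists>p. k = 2*p+1) \<or> (\<exists>p. k = 2*p+2)"
  by presburger

lemma adj2:
  assumes "u \<ge> 1" "v \<ge> 1"
  shows "grid_adj 2 m u v \<longleftrightarrow> u \<in> grid_vertices 2 m \<and> v \<in> grid_vertices 2 m \<and>
     (u = v+2 \<or> v = u+2 \<or> (odd v \<and> u = v+1) \<or> (even v \<and> u+1 = v))"
  using oddev[OF assms(1)] oddev[OF assms(2)]
  unfolding grid_adj_def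
  apply (elim disjE exE)
  apply (simp_all add: rc)
  apply (auto; presburger)+
  done

lemma nbhd2:
  assumes "v \<in> grid_vertices 2 m"
  shows "closed_nbhd 2 m v = {v, v+2, v-2, if odd v then v+1 else v-1} \<inter> {1..2*m}"
proof -
  have v1: "v \<ge> 1" using assms unfolding grid_vertices_def by auto
  have "closed_nbhd 2 m v = {u \<in> {1..2*m}. u = v \<or> u = v+2 \<or> v = u+2 \<or> (odd v \<and> u = v+1) \<or> (even v \<and> u+1 = v)}"
    unfolding closed_nbhd_def using adj2 v1 assms by (auto simp: grid_vertices_def)
  also have "\<dots> = {v, v+2, v-2, if odd v then v+1 else v-1} \<inter> {1..2*m}"
    using v1 by auto
  finally show ?thesis .
qed

lemma nbS:
  assumes "S \<subseteq> {1..2*m}" "v \<in> {1..2*m}" "A = {v, v+2, v-2, if odd v then v+1 else v-1}"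
  shows "closed_nbhd 2 m v \<inter> S = A \<inter> S"
proof -
  have "closed_nbhd 2 m v = A \<inter> {1..2*m}" using nbhd2[of v m] assms(2,3) unfolding grid_vertices_def by simp
  then show ?thesis using assms(1) by blast
qed

theorem lemma4p4:
  fixes m i :: nat and S :: "nat set"
  assumes "locating_dominating 2 m S"
    and "is_block 2 m 4 {i..i+7}"
    and "card ({i..i+7} \<inter> S) = 2"
  shows "i \<noteq> 1 \<and> i + 7 \<noteq> 2*m \<and> i - 2 \<in> S \<and> i - 1 \<in> S \<and> i + 8 \<in> S \<and> i + 9 \<in> S"
proof -
  have Ssub: "S \<subseteq> {1..2*m}" using assms(1) unfolding locating_dominating_def grid_vertices_def by auto
  have dom: "\<And>v. v \<in> {1..2*m} \<Longrightarrow> v \<notin> S \<Longrightarrow> closed_nbhd 2 m v \<inter> S \<noteq> {}"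
    using assms(1) unfolding locating_dominating_def grid_vertices_def by auto
  have sep: "\<And>u v. u \<in> {1..2*m} \<Longrightarrow> v \<in> {1..2*m} \<Longrightarrow> u \<notin> S \<Longrightarrow> v \<notin> S \<Longrightarrow> u \<noteq> v \<Longrightarrow>
      closed_nbhd 2 m u \<inter> S \<noteq> closed_nbhd 2 m v \<inter> S"
    using assms(1) unfolding locating_dominating_def grid_vertices_def by auto
  obtain c where c: "1 \<le> c" "c + 3 \<le> m" "{i..i+7} = {2*(c-1)+1 .. 2*(c+4-1)}"
    using assms(2) unfolding is_block_def by auto
  have ieq: "i = 2*c - 1" using c(3) c(1)
  proof -
    have "i = 2*(c-1)+1" using c(3) by (simp add: Icc_eq_Icc)
    then show ?thesis using c(1) by simp
  qed
  have i7: "i + 7 \<le> 2*m" "1 \<le> i" "odd i" using ieq c by auto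
  have three: "\<And>a b d. a \<noteq> b \<Longrightarrow> a \<noteq> d \<Longrightarrow> b \<noteq> d \<Longrightarrow> {a,b,d} \<subseteq> {i..i+7} \<Longrightarrow>
      \<not> (a \<in> S \<and> b \<in> S \<and> d \<in> S)"
  proof
    fix a b d assume h: "a \<noteq> b" "a \<noteq> d" "b \<noteq> d" "{a,b,d} \<subseteq> {i..i+7}" "a \<in> S \<and> b \<in> S \<and> d \<in> S"
    then have "{a,b,d} \<subseteq> {i..i+7} \<inter> S" by auto
    then have "card {a,b,d} \<le> card ({i..i+7} \<inter> S)" by (intro card_mono) auto
    then show False using h assms(3) by simp
  qed
  have nb0: "closed_nbhd 2 m (i) \<inter> S = {i - 2, i, i + 1, i + 2} \<inter> S"
    by (rule nbS) (use i7 Ssub in auto)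
  have nb1: "closed_nbhd 2 m (i + 1) \<inter> S = {i - 1, i, i + 1, i + 3} \<inter> S"
    by (rule nbS) (use i7 Ssub in auto)
  have nb2: "closed_nbhd 2 m (i + 2) \<inter> S = {i, i + 2, i + 3, i + 4} \<inter> S"
    by (rule nbS) (use i7 Ssub in auto)
  have nb3: "closed_nbhd 2 m (i + 3) \<inter> S = {i + 1, i + 2, i + 3, i + 5} \<inter> S"
    by (rule nbS) (use i7 Ssub in auto)
  have nb4: "closed_nbhd 2 m (i + 4) \<inter> S = {i + 2, i + 4, i + 5, i + 6} \<inter> S"
    by (rule nbS) (use i7 Ssub in auto)
  have nb5: "closed_nbhd 2 m (i + 5) \<inter> S = {i + 3, i + 4, i + 5, i + 7} \<inter> S"
    by (rule nbS) (use i7 Ssub in auto)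
  have nb6: "closed_nbhd 2 m (i + 6) \<inter> S = {i + 4, i + 6, i + 7, i + 8} \<inter> S"
    by (rule nbS) (use i7 Ssub in auto)
  have nb7: "closed_nbhd 2 m (i + 7) \<inter> S = {i + 5, i + 6, i + 7, i + 9} \<inter> S"
    by (rule nbS) (use i7 Ssub in auto)
  have d0: "\<not> (i \<in> S) \<longrightarrow> (i - 2 \<in> S) \<or> (i + 1 \<in> S) \<or> (i + 2 \<in> S)"
    using dom[of "i"] nb0 i7 by auto
  have d1: "\<not> (i + 1 \<in> S) \<longrightarrow> (i - 1 \<in> S) \<or> (i \<in> S) \<or> (i + 3 \<in> S)"
    using dom[of "i + 1"] nb1 i7 by auto
  have d2: "\<not> (i + 2 \<in> S) \<longrightarrow> (i \<in> S) \<or> (i + 3 \<in> S) \<or> (i + 4 \<in> S)"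
    using dom[of "i + 2"] nb2 i7 by auto
  have d3: "\<not> (i + 3 \<in> S) \<longrightarrow> (i + 1 \<in> S) \<or> (i + 2 \<in> S) \<or> (i + 5 \<in> S)"
    using dom[of "i + 3"] nb3 i7 by auto
  have d4: "\<not> (i + 4 \<in> S) \<longrightarrow> (i + 2 \<in> S) \<or> (i + 5 \<in> S) \<or> (i + 6 \<in> S)"
    using dom[of "i + 4"] nb4 i7 by auto
  have d5: "\<not> (i + 5 \<in> S) \<longrightarrow> (i + 3 \<in> S) \<or> (i + 4 \<in> S) \<or> (i + 7 \<in> S)"
    using dom[of "i + 5"] nb5 i7 by auto
  have d6: "\<not> (i + 6 \<in> S) \<longrightarrow> (i + 4 \<in> S) \<or> (i + 7 \<in> S) \<or> (i + 8 \<in> S)"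
    using dom[of "i + 6"] nb6 i7 by auto
  have d7: "\<not> (i + 7 \<in> S) \<longrightarrow> (i + 5 \<in> S) \<or> (i + 6 \<in> S) \<or> (i + 9 \<in> S)"
    using dom[of "i + 7"] nb7 i7 by auto
  have s0_1: "\<not> (i \<in> S) \<longrightarrow> \<not> (i + 1 \<in> S) \<longrightarrow> (i - 2 \<in> S) \<or> (i - 1 \<in> S) \<or> (i + 2 \<in> S) \<or> (i + 3 \<in> S)"
    using sep[of "i" "i + 1"] nb0 nb1 i7 by auto
  have s0_2: "\<not> (i \<in> S) \<longrightarrow> \<not> (i + 2 \<in> S) \<longrightarrow> (i - 2 \<in> S) \<or> (i + 1 \<in> S) \<or> (i + 3 \<in> S) \<or> (i + 4 \<in> S)"
    using sep[of "i" "i + 2"] nb0 nb2 i7 by auto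
  have s0_3: "\<not> (i \<in> S) \<longrightarrow> \<not> (i + 3 \<in> S) \<longrightarrow> (i - 2 \<in> S) \<or> (i + 5 \<in> S)"
    using sep[of "i" "i + 3"] nb0 nb3 i7 by auto
  have s0_4: "\<not> (i \<in> S) \<longrightarrow> \<not> (i + 4 \<in> S) \<longrightarrow> (i - 2 \<in> S) \<or> (i + 1 \<in> S) \<or> (i + 5 \<in> S) \<or> (i + 6 \<in> S)"
    using sep[of "i" "i + 4"] nb0 nb4 i7 by auto
  have s0_5: "\<not> (i \<in> S) \<longrightarrow> \<not> (i + 5 \<in> S) \<longrightarrow> (i - 2 \<in> S) \<or> (i + 1 \<in> S) \<or> (i + 2 \<in> S) \<or> (i + 3 \<in> S) \<or> (i + 4 \<in> S) \<or> (i + 7 \<in> S)"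
    using sep[of "i" "i + 5"] nb0 nb5 i7 by auto
  have s0_6: "\<not> (i \<in> S) \<longrightarrow> \<not> (i + 6 \<in> S) \<longrightarrow> (i - 2 \<in> S) \<or> (i + 1 \<in> S) \<or> (i + 2 \<in> S) \<or> (i + 4 \<in> S) \<or> (i + 7 \<in> S) \<or> (i + 8 \<in> S)"
    using sep[of "i" "i + 6"] nb0 nb6 i7 by auto
  have s0_7: "\<not> (i \<in> S) \<longrightarrow> \<not> (i + 7 \<in> S) \<longrightarrow> (i - 2 \<in> S) \<or> (i + 1 \<in> S) \<or> (i + 2 \<in> S) \<or> (i + 5 \<in> S) \<or> (i + 6 \<in> S) \<or> (i + 9 \<in> S)"
    using sep[of "i" "i + 7"] nb0 nb7 i7 by auto
  have s1_2: "\<not> (i + 1 \<in> S) \<longrightarrow> \<not> (i + 2 \<in> S) \<longrightarrow> (i - 1 \<in> S) \<or> (i + 4 \<in> S)"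
    using sep[of "i + 1" "i + 2"] nb1 nb2 i7 by auto
  have s1_3: "\<not> (i + 1 \<in> S) \<longrightarrow> \<not> (i + 3 \<in> S) \<longrightarrow> (i - 1 \<in> S) \<or> (i \<in> S) \<or> (i + 2 \<in> S) \<or> (i + 5 \<in> S)"
    using sep[of "i + 1" "i + 3"] nb1 nb3 i7 by auto
  have s1_4: "\<not> (i + 1 \<in> S) \<longrightarrow> \<not> (i + 4 \<in> S) \<longrightarrow> (i - 1 \<in> S) \<or> (i \<in> S) \<or> (i + 2 \<in> S) \<or> (i + 3 \<in> S) \<or> (i + 5 \<in> S) \<or> (i + 6 \<in> S)"
    using sep[of "i + 1" "i + 4"] nb1 nb4 i7 by auto
  have s1_5: "\<not> (i + 1 \<in> S) \<longrightarrow> \<not> (i + 5 \<in> S) \<longrightarrow> (i - 1 \<in> S) \<or> (i \<in> S) \<or> (i + 4 \<in> S) \<or> (i + 7 \<in> S)"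
    using sep[of "i + 1" "i + 5"] nb1 nb5 i7 by auto
  have s1_6: "\<not> (i + 1 \<in> S) \<longrightarrow> \<not> (i + 6 \<in> S) \<longrightarrow> (i - 1 \<in> S) \<or> (i \<in> S) \<or> (i + 3 \<in> S) \<or> (i + 4 \<in> S) \<or> (i + 7 \<in> S) \<or> (i + 8 \<in> S)"
    using sep[of "i + 1" "i + 6"] nb1 nb6 i7 by auto
  have s1_7: "\<not> (i + 1 \<in> S) \<longrightarrow> \<not> (i + 7 \<in> S) \<longrightarrow> (i - 1 \<in> S) \<or> (i \<in> S) \<or> (i + 3 \<in> S) \<or> (i + 5 \<in> S) \<or> (i + 6 \<in> S) \<or> (i + 9 \<in> S)"
    using sep[of "i + 1" "i + 7"] nb1 nb7 i7 by auto
  have s2_3: "\<not> (i + 2 \<in> S) \<longrightarrow> \<not> (i + 3 \<in> S) \<longrightarrow> (i \<in> S) \<or> (i + 1 \<in> S) \<or> (i + 4 \<in> S) \<or> (i + 5 \<in> S)"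
    using sep[of "i + 2" "i + 3"] nb2 nb3 i7 by auto
  have s2_4: "\<not> (i + 2 \<in> S) \<longrightarrow> \<not> (i + 4 \<in> S) \<longrightarrow> (i \<in> S) \<or> (i + 3 \<in> S) \<or> (i + 5 \<in> S) \<or> (i + 6 \<in> S)"
    using sep[of "i + 2" "i + 4"] nb2 nb4 i7 by auto
  have s2_5: "\<not> (i + 2 \<in> S) \<longrightarrow> \<not> (i + 5 \<in> S) \<longrightarrow> (i \<in> S) \<or> (i + 7 \<in> S)"
    using sep[of "i + 2" "i + 5"] nb2 nb5 i7 by auto
  have s2_6: "\<not> (i + 2 \<in> S) \<longrightarrow> \<not> (i + 6 \<in> S) \<longrightarrow> (i \<in> S) \<or> (i + 3 \<in> S) \<or> (i + 7 \<in> S) \<or> (i + 8 \<in> S)"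
    using sep[of "i + 2" "i + 6"] nb2 nb6 i7 by auto
  have s2_7: "\<not> (i + 2 \<in> S) \<longrightarrow> \<not> (i + 7 \<in> S) \<longrightarrow> (i \<in> S) \<or> (i + 3 \<in> S) \<or> (i + 4 \<in> S) \<or> (i + 5 \<in> S) \<or> (i + 6 \<in> S) \<or> (i + 9 \<in> S)"
    using sep[of "i + 2" "i + 7"] nb2 nb7 i7 by auto
  have s3_4: "\<not> (i + 3 \<in> S) \<longrightarrow> \<not> (i + 4 \<in> S) \<longrightarrow> (i + 1 \<in> S) \<or> (i + 6 \<in> S)"
    using sep[of "i + 3" "i + 4"] nb3 nb4 i7 by auto
  have s3_5: "\<not> (i + 3 \<in> S) \<longrightarrow> \<not> (i + 5 \<in> S) \<longrightarrow> (i + 1 \<in> S) \<or> (i + 2 \<in> S) \<or> (i + 4 \<in> S) \<or> (i + 7 \<in> S)"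
    using sep[of "i + 3" "i + 5"] nb3 nb5 i7 by auto
  have s3_6: "\<not> (i + 3 \<in> S) \<longrightarrow> \<not> (i + 6 \<in> S) \<longrightarrow> (i + 1 \<in> S) \<or> (i + 2 \<in> S) \<or> (i + 4 \<in> S) \<or> (i + 5 \<in> S) \<or> (i + 7 \<in> S) \<or> (i + 8 \<in> S)"
    using sep[of "i + 3" "i + 6"] nb3 nb6 i7 by auto
  have s3_7: "\<not> (i + 3 \<in> S) \<longrightarrow> \<not> (i + 7 \<in> S) \<longrightarrow> (i + 1 \<in> S) \<or> (i + 2 \<in> S) \<or> (i + 6 \<in> S) \<or> (i + 9 \<in> S)"
    using sep[of "i + 3" "i + 7"] nb3 nb7 i7 by auto
  have s4_5: "\<not> (i + 4 \<in> S) \<longrightarrow> \<not> (i + 5 \<in> S) \<longrightarrow> (i + 2 \<in> S) \<or> (i + 3 \<in> S) \<or> (i + 6 \<in> S) \<or> (i + 7 \<in> S)"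
    using sep[of "i + 4" "i + 5"] nb4 nb5 i7 by auto
  have s4_6: "\<not> (i + 4 \<in> S) \<longrightarrow> \<not> (i + 6 \<in> S) \<longrightarrow> (i + 2 \<in> S) \<or> (i + 5 \<in> S) \<or> (i + 7 \<in> S) \<or> (i + 8 \<in> S)"
    using sep[of "i + 4" "i + 6"] nb4 nb6 i7 by auto
  have s4_7: "\<not> (i + 4 \<in> S) \<longrightarrow> \<not> (i + 7 \<in> S) \<longrightarrow> (i + 2 \<in> S) \<or> (i + 9 \<in> S)"
    using sep[of "i + 4" "i + 7"] nb4 nb7 i7 by auto
  have s5_6: "\<not> (i + 5 \<in> S) \<longrightarrow> \<not> (i + 6 \<in> S) \<longrightarrow> (i + 3 \<in> S) \<or> (i + 8 \<in> S)"
    using sep[of "i + 5" "i + 6"] nb5 nb6 i7 by auto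
  have s5_7: "\<not> (i + 5 \<in> S) \<longrightarrow> \<not> (i + 7 \<in> S) \<longrightarrow> (i + 3 \<in> S) \<or> (i + 4 \<in> S) \<or> (i + 6 \<in> S) \<or> (i + 9 \<in> S)"
    using sep[of "i + 5" "i + 7"] nb5 nb7 i7 by auto
  have s6_7: "\<not> (i + 6 \<in> S) \<longrightarrow> \<not> (i + 7 \<in> S) \<longrightarrow> (i + 4 \<in> S) \<or> (i + 5 \<in> S) \<or> (i + 8 \<in> S) \<or> (i + 9 \<in> S)"
    using sep[of "i + 6" "i + 7"] nb6 nb7 i7 by auto
  have t0: "\<not> ((i \<in> S) \<and> (i + 1 \<in> S) \<and> (i + 2 \<in> S))"
    using three[of "i" "i + 1" "i + 2"] by simp
  have t1: "\<not> ((i \<in> S) \<and> (i + 1 \<in> S) \<and> (i + 3 \<in> S))"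
    using three[of "i" "i + 1" "i + 3"] by simp
  have t2: "\<not> ((i \<in> S) \<and> (i + 1 \<in> S) \<and> (i + 4 \<in> S))"
    using three[of "i" "i + 1" "i + 4"] by simp
  have t3: "\<not> ((i \<in> S) \<and> (i + 1 \<in> S) \<and> (i + 5 \<in> S))"
    using three[of "i" "i + 1" "i + 5"] by simp
  have t4: "\<not> ((i \<in> S) \<and> (i + 1 \<in> S) \<and> (i + 6 \<in> S))"
    using three[of "i" "i + 1" "i + 6"] by simp
  have t5: "\<not> ((i \<in> S) \<and> (i + 1 \<in> S) \<and> (i + 7 \<in> S))"
    using three[of "i" "i + 1" "i + 7"] by simp
  have t6: "\<not> ((i \<in> S) \<and> (i + 2 \<in> S) \<and> (i + 3 \<in> S))"
    using three[of "i" "i + 2" "i + 3"] by simp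
  have t7: "\<not> ((i \<in> S) \<and> (i + 2 \<in> S) \<and> (i + 4 \<in> S))"
    using three[of "i" "i + 2" "i + 4"] by simp
  have t8: "\<not> ((i \<in> S) \<and> (i + 2 \<in> S) \<and> (i + 5 \<in> S))"
    using three[of "i" "i + 2" "i + 5"] by simp
  have t9: "\<not> ((i \<in> S) \<and> (i + 2 \<in> S) \<and> (i + 6 \<in> S))"
    using three[of "i" "i + 2" "i + 6"] by simp
  have t10: "\<not> ((i \<in> S) \<and> (i + 2 \<in> S) \<and> (i + 7 \<in> S))"
    using three[of "i" "i + 2" "i + 7"] by simp
  have t11: "\<not> ((i \<in> S) \<and> (i + 3 \<in> S) \<and> (i + 4 \<in> S))"
    using three[of "i" "i + 3" "i + 4"] by simp
  have t12: "\<not> ((i \<in> S) \<and> (i + 3 \<in> S) \<and> (i + 5 \<in> S))"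
    using three[of "i" "i + 3" "i + 5"] by simp
  have t13: "\<not> ((i \<in> S) \<and> (i + 3 \<in> S) \<and> (i + 6 \<in> S))"
    using three[of "i" "i + 3" "i + 6"] by simp
  have t14: "\<not> ((i \<in> S) \<and> (i + 3 \<in> S) \<and> (i + 7 \<in> S))"
    using three[of "i" "i + 3" "i + 7"] by simp
  have t15: "\<not> ((i \<in> S) \<and> (i + 4 \<in> S) \<and> (i + 5 \<in> S))"
    using three[of "i" "i + 4" "i + 5"] by simp
  have t16: "\<not> ((i \<in> S) \<and> (i + 4 \<in> S) \<and> (i + 6 \<in> S))"
    using three[of "i" "i + 4" "i + 6"] by simp
  have t17: "\<not> ((i \<in> S) \<and> (i + 4 \<in> S) \<and> (i + 7 \<in> S))"
    using three[of "i" "i + 4" "i + 7"] by simp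
  have t18: "\<not> ((i \<in> S) \<and> (i + 5 \<in> S) \<and> (i + 6 \<in> S))"
    using three[of "i" "i + 5" "i + 6"] by simp
  have t19: "\<not> ((i \<in> S) \<and> (i + 5 \<in> S) \<and> (i + 7 \<in> S))"
    using three[of "i" "i + 5" "i + 7"] by simp
  have t20: "\<not> ((i \<in> S) \<and> (i + 6 \<in> S) \<and> (i + 7 \<in> S))"
    using three[of "i" "i + 6" "i + 7"] by simp
  have t21: "\<not> ((i + 1 \<in> S) \<and> (i + 2 \<in> S) \<and> (i + 3 \<in> S))"
    using three[of "i + 1" "i + 2" "i + 3"] by simp
  have t22: "\<not> ((i + 1 \<in> S) \<and> (i + 2 \<in> S) \<and> (i + 4 \<in> S))"
    using three[of "i + 1" "i + 2" "i + 4"] by simp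
  have t23: "\<not> ((i + 1 \<in> S) \<and> (i + 2 \<in> S) \<and> (i + 5 \<in> S))"
    using three[of "i + 1" "i + 2" "i + 5"] by simp
  have t24: "\<not> ((i + 1 \<in> S) \<and> (i + 2 \<in> S) \<and> (i + 6 \<in> S))"
    using three[of "i + 1" "i + 2" "i + 6"] by simp
  have t25: "\<not> ((i + 1 \<in> S) \<and> (i + 2 \<in> S) \<and> (i + 7 \<in> S))"
    using three[of "i + 1" "i + 2" "i + 7"] by simp
  have t26: "\<not> ((i + 1 \<in> S) \<and> (i + 3 \<in> S) \<and> (i + 4 \<in> S))"
    using three[of "i + 1" "i + 3" "i + 4"] by simp
  have t27: "\<not> ((i + 1 \<in> S) \<and> (i + 3 \<in> S) \<and> (i + 5 \<in> S))"
    using three[of "i + 1" "i + 3" "i + 5"] by simp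
  have t28: "\<not> ((i + 1 \<in> S) \<and> (i + 3 \<in> S) \<and> (i + 6 \<in> S))"
    using three[of "i + 1" "i + 3" "i + 6"] by simp
  have t29: "\<not> ((i + 1 \<in> S) \<and> (i + 3 \<in> S) \<and> (i + 7 \<in> S))"
    using three[of "i + 1" "i + 3" "i + 7"] by simp
  have t30: "\<not> ((i + 1 \<in> S) \<and> (i + 4 \<in> S) \<and> (i + 5 \<in> S))"
    using three[of "i + 1" "i + 4" "i + 5"] by simp
  have t31: "\<not> ((i + 1 \<in> S) \<and> (i + 4 \<in> S) \<and> (i + 6 \<in> S))"
    using three[of "i + 1" "i + 4" "i + 6"] by simp
  have t32: "\<not> ((i + 1 \<in> S) \<and> (i + 4 \<in> S) \<and> (i + 7 \<in> S))"
    using three[of "i + 1" "i + 4" "i + 7"] by simp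
  have t33: "\<not> ((i + 1 \<in> S) \<and> (i + 5 \<in> S) \<and> (i + 6 \<in> S))"
    using three[of "i + 1" "i + 5" "i + 6"] by simp
  have t34: "\<not> ((i + 1 \<in> S) \<and> (i + 5 \<in> S) \<and> (i + 7 \<in> S))"
    using three[of "i + 1" "i + 5" "i + 7"] by simp
  have t35: "\<not> ((i + 1 \<in> S) \<and> (i + 6 \<in> S) \<and> (i + 7 \<in> S))"
    using three[of "i + 1" "i + 6" "i + 7"] by simp
  have t36: "\<not> ((i + 2 \<in> S) \<and> (i + 3 \<in> S) \<and> (i + 4 \<in> S))"
    using three[of "i + 2" "i + 3" "i + 4"] by simp
  have t37: "\<not> ((i + 2 \<in> S) \<and> (i + 3 \<in> S) \<and> (i + 5 \<in> S))"
    using three[of "i + 2" "i + 3" "i + 5"] by simp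
  have t38: "\<not> ((i + 2 \<in> S) \<and> (i + 3 \<in> S) \<and> (i + 6 \<in> S))"
    using three[of "i + 2" "i + 3" "i + 6"] by simp
  have t39: "\<not> ((i + 2 \<in> S) \<and> (i + 3 \<in> S) \<and> (i + 7 \<in> S))"
    using three[of "i + 2" "i + 3" "i + 7"] by simp
  have t40: "\<not> ((i + 2 \<in> S) \<and> (i + 4 \<in> S) \<and> (i + 5 \<in> S))"
    using three[of "i + 2" "i + 4" "i + 5"] by simp
  have t41: "\<not> ((i + 2 \<in> S) \<and> (i + 4 \<in> S) \<and> (i + 6 \<in> S))"
    using three[of "i + 2" "i + 4" "i + 6"] by simp
  have t42: "\<not> ((i + 2 \<in> S) \<and> (i + 4 \<in> S) \<and> (i + 7 \<in> S))"
    using three[of "i + 2" "i + 4" "i + 7"] by simp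
  have t43: "\<not> ((i + 2 \<in> S) \<and> (i + 5 \<in> S) \<and> (i + 6 \<in> S))"
    using three[of "i + 2" "i + 5" "i + 6"] by simp
  have t44: "\<not> ((i + 2 \<in> S) \<and> (i + 5 \<in> S) \<and> (i + 7 \<in> S))"
    using three[of "i + 2" "i + 5" "i + 7"] by simp
  have t45: "\<not> ((i + 2 \<in> S) \<and> (i + 6 \<in> S) \<and> (i + 7 \<in> S))"
    using three[of "i + 2" "i + 6" "i + 7"] by simp
  have t46: "\<not> ((i + 3 \<in> S) \<and> (i + 4 \<in> S) \<and> (i + 5 \<in> S))"
    using three[of "i + 3" "i + 4" "i + 5"] by simp
  have t47: "\<not> ((i + 3 \<in> S) \<and> (i + 4 \<in> S) \<and> (i + 6 \<in> S))"
    using three[of "i + 3" "i + 4" "i + 6"] by simp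
  have t48: "\<not> ((i + 3 \<in> S) \<and> (i + 4 \<in> S) \<and> (i + 7 \<in> S))"
    using three[of "i + 3" "i + 4" "i + 7"] by simp
  have t49: "\<not> ((i + 3 \<in> S) \<and> (i + 5 \<in> S) \<and> (i + 6 \<in> S))"
    using three[of "i + 3" "i + 5" "i + 6"] by simp
  have t50: "\<not> ((i + 3 \<in> S) \<and> (i + 5 \<in> S) \<and> (i + 7 \<in> S))"
    using three[of "i + 3" "i + 5" "i + 7"] by simp
  have t51: "\<not> ((i + 3 \<in> S) \<and> (i + 6 \<in> S) \<and> (i + 7 \<in> S))"
    using three[of "i + 3" "i + 6" "i + 7"] by simp
  have t52: "\<not> ((i + 4 \<in> S) \<and> (i + 5 \<in> S) \<and> (i + 6 \<in> S))"
    using three[of "i + 4" "i + 5" "i + 6"] by simp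
  have t53: "\<not> ((i + 4 \<in> S) \<and> (i + 5 \<in> S) \<and> (i + 7 \<in> S))"
    using three[of "i + 4" "i + 5" "i + 7"] by simp
  have t54: "\<not> ((i + 4 \<in> S) \<and> (i + 6 \<in> S) \<and> (i + 7 \<in> S))"
    using three[of "i + 4" "i + 6" "i + 7"] by simp
  have t55: "\<not> ((i + 5 \<in> S) \<and> (i + 6 \<in> S) \<and> (i + 7 \<in> S))"
    using three[of "i + 5" "i + 6" "i + 7"] by simp
  have core: "(i - 2 \<in> S) \<and> (i - 1 \<in> S) \<and> (i + 8 \<in> S) \<and> (i + 9 \<in> S)"
    by (rule finite_core[OF t0 t1 t2 t3 t4 t5 t6 t7 t8 t9 t10 t11 t12 t13 t14 t15 t16 t17 t18 t19 t20 t21 t22 t23 t24 t25 t26 t27 t28 t29 t30 t31 t32 t33 t34 t35 t36 t37 t38 t39 t40 t41 t42 t43 t44 t45 t46 t47 t48 t49 t50 t51 t52 t53 t54 t55 d0 d1 d2 d3 d4 d5 d6 d7 s0_1 s0_2 s0_3 s0_4 s0_5 s0_6 s0_7 s1_2 s1_3 s1_4 s1_5 s1_6 s1_7 s2_3 s2_4 s2_5 s2_6 s2_7 s3_4 s3_5 s3_6 s3_7 s4_5 s4_6 s4_7 s5_6 s5_7 s6_7])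
  have "i \<noteq> 1" using core Ssub by auto
  moreover have "i + 7 \<noteq> 2*m" using core Ssub by auto
  ultimately show ?thesis using core by simp
qed

end
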